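(* Let $\mathcal{O}=(S,S_+,R,E,f,N)$ be an observation table, and let $(\overline{b_\omega})_{\omega\in S\cup S_+\cup R}$ and $(\overline{q_\omega})_{\omega\in S\cup S_+\cup R}$ be an assignment of the ending reset variables and location variables satisfying $C_1\wedge C_2\wedge C_3\wedge C_4$. Let $\mathcal{H}$ be the hypothesis automaton constructed from $\mathcal{O}$ and this assignment. Then: (i) $\mathcal{H}$ is a deterministic one-clock timed automaton; (ii) for every $\omega\in S\cup S_+\cup R$, $\mathcal{H}$ accepts $\omega$ if and only if $\textsf{MQ}(\omega)=+$; (iii) for any $\omega_1,\omega_2\in S\cup S_+\cup R$, if $f(\omega_1,\omega_2,i_1,i_2)=\bot$ where $i_1,i_2$ are the last resets of $\omega_1,\omega_2$ determined by the assignment $\overline{b}$ (i.e. $lr(\omega_1,i_1)$ and $lr(\omega_2,i_2)$ hold), then $\overline{q_{\omega_1}}\neq\overline{q_{\omega_2}}$ and $\omega_1,\omega_2$ reach distinct locations in $\mathcal{H}$.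
   Context: Setting: a finite alphabet $\Sigma$, a single clock, and a target timed language $L$ with membership function $\textsf{MQ}(\omega)=+$ if $\omega\in L$, $-$ otherwise. A one-clock timed automaton (OTA) is $(\Sigma,Q,q_0,F,c,\Delta)$ with transitions $(q,\sigma,\phi,b,q')\in Q\times\Sigma\times\Phi_c\times\{\top,\bot\}\times Q$, guards $\phi$ being intervals with endpoints in $\mathbb{N}\cup\{\infty\}$; a timed word $(\sigma_1,t_1)\cdots(\sigma_n,t_n)$ ($t_i\ge0$ delays) runs from clock value $0$ at $q_0$, taking at step $i$ a transition from the current location with action $\sigma_i$ whose guard contains (current clock value $+t_i$), after which the clock becomes $0$ if the transition's reset flag $b=\top$ and (current clock $+t_i$) otherwise; it is accepted if the run ends in $F$. Deterministic means guards of transitions with the same source and action are disjoint. Regions relative to a fixed $\kappa\in\mathbb{N}$: $[n,n]$ for $n\le\kappa$, $(n,n+1)$ for $n<\kappa$, $(\kappa,\infty)$; $\llbracket v\rrbracket$ is the region containing $v$. For a timed word $\omega$ of length $n$ and $0\le i\le n$, $\nu_c(\omega,i)=\sum_{j=i+1}^n t_j$. Test $T(\omega_1,\omega_2,i_1,i_2,e)$: if $e$ empty, $T=\top$ iff $\textsf{MQ}(\omega_1)=\textsf{MQ}(\omega_2)$; otherwise, with $e=(\sigma_1,t_1)\cdots(\sigma_m,t_m)$, $\nu_1=\nu_c(\omega_1,i_1)$, $\nu_2=\nu_c(\omega_2,i_2)$, form $e_1,e_2$ by adding $|\nu_1-\nu_2|$ to the first delay of $e$ for the word with the smaller $\nu$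 (and $e_1=e_2=e$ if equal), and $T=\top$ iff $\textsf{MQ}(\omega_1e_1)=\textsf{MQ}(\omega_2e_2)$. If $m$ is the length of the longest common prefix of $\omega_1,\omega_2$, the valid last-reset combinations are $\mathcal{C}(\omega_1,\omega_2)=\{(i_1,i_2):0\le i_1\le|\omega_1|,0\le i_2\le|\omega_2|,(i_1\le m\wedge i_2\le m)\Rightarrow i_1=i_2\}$. An observation table $\mathcal{O}=(S,S_+,R,E,f,N)$: $S,S_+,R$ disjoint finite sets of timed words with $S\cup S_+\cup R$ prefix-closed, $\epsilon\in S$, and $\omega\cdot(\sigma,0)\in S\cup S_+\cup R$ for all $\omega\in S\cup S_+$, $\sigma\in\Sigma$; $E$ a finite set of timed words with $\epsilon\in E$; $N\in\mathbb{N}$; and $f(\omega_1,\omega_2,i_1,i_2)=\top$ iff $T(\omega_1,\omega_2,i_1,i_2,e)=\top$ for all $e\in E$ (for $\omega_1,\omega_2\in S\cup S_+\cup R$, $(i_1,i_2)\in\mathcal{C}(\omega_1,\omega_2)$), else $\bot$. Variables: for each $\omega\in S\cup S_+\cup R$ a Boolean ending reset variable $b_\omega$ (whether the clock resets after the last action of $\omega$; $b_\epsilon=\top$) and an integer location variable $q_\omega$. With $\omega|_i$ the length-$i$ prefix, $lr(\omega,i)=b_{\omega|_i}\wedge\bigwedge_{i<j\le|\omega|}\neg b_{\omega|_j}$ and $LR(\omega_1,\omega_2,i,j)=lr(\omega_1,i)\wedge lr(\omega_2,j)$. Constraints: $C_1$ is the conjunction over all $\omega_1,\omega_2$, $(i,j)\in\mathcal{C}(\omega_1,\omega_2)$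 with $f(\omega_1,\omega_2,i,j)=\bot$ of $LR(\omega_1,\omega_2,i,j)\Rightarrow q_{\omega_1}\neq q_{\omega_2}$. $C_2$ is the conjunction, over all $\omega_1,\omega_2$ with $\omega_1'=\omega_1(\sigma,t_1)$, $\omega_2'=\omega_2(\sigma,t_2)$ in $S\cup S_+\cup R$ and $(i,j)\in\mathcal{C}(\omega_1,\omega_2)$ with $f(\omega_1,\omega_2,i,j)=\top$ and $\llbracket\nu_c(\omega_1,i)+t_1\rrbracket=\llbracket\nu_c(\omega_2,j)+t_2\rrbracket$, of $(q_{\omega_1}=q_{\omega_2}\wedge LR(\omega_1,\omega_2,i,j))\Rightarrow(b_{\omega_1'}=b_{\omega_2'}\wedge q_{\omega_1'}=q_{\omega_2'})$. $C_3=\bigwedge_{1\le k\le N}\bigvee_{\omega\in S\cup S_+}q_\omega=k\ \wedge\ \bigwedge_{\omega\in S\cup S_+\cup R}1\le q_\omega\le N$. $C_4=\bigwedge_{1\le k\le|S|}q_{\omega_k}=k$ for a fixed enumeration $\omega_1,\dots,\omega_{|S|}$ of $S$. Hypothesis construction from an assignment $\overline{b},\overline{q}$: $Q_{\mathcal{H}}=\{\overline{q_\omega}:\omega\in S\cup S_+\}$, initial location $\overline{q_\epsilon}$, accepting $F_{\mathcal{H}}=\{\overline{q_\omega}:\omega\in S\cup S_+,\textsf{MQ}(\omega)=+\}$. For each pair $\omega_1,\omega_2=\omega_1(\sigma,t)$ in $S\cup S_+\cup R$ form the auxiliary transition $(\overline{q_{\omega_1}},\sigma,\psi,\overline{b_{\omega_2}},\overline{q_{\omega_2}})$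 where $\psi=\nu(\omega_1)+t$ and $\nu(\omega_1)$ is the clock value after $\omega_1$ computed using the resets $\overline{b}$ of its prefixes. For each $q,\sigma$, sort the list of values $\psi$ of auxiliary transitions from $q$ with action $\sigma$ as $\mu_0<\dots<\mu_n$ and apply the partition function $P$; for each auxiliary transition with value $\mu_i$ add $(q,\sigma,g_i,b,q')$ to $\Delta_{\mathcal{H}}$. The partition function: with $\mu_0=0$ and $\mu_{n+1}=\infty$, $g_i=[\mu_i,\mu_{i+1})$ if $\mu_i,\mu_{i+1}\in\mathbb{N}$; $(\lfloor\mu_i\rfloor,\mu_{i+1})$ if $\mu_i\notin\mathbb{N},\mu_{i+1}\in\mathbb{N}$; $[\mu_i,\lfloor\mu_{i+1}\rfloor]$ if $\mu_i\in\mathbb{N},\mu_{i+1}\notin\mathbb{N}$; $(\lfloor\mu_i\rfloor,\lfloor\mu_{i+1}\rfloor]$ if both $\notin\mathbb{N}$ (with $\infty$ treated as an integer). *)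

theory Defs
  imports Complex_Main
begin

type_synonym 'a tword = "('a \<times> real) list"

definition tword_over :: "'a set \<Rightarrow> 'a tword \<Rightarrow> bool" where
  "tword_over Alph w \<longleftrightarrow> (\<forall>(\<sigma>, t) \<in> set w. \<sigma> \<in> Alph \<and> t \<ge> 0)"

definition nu_c :: "'a tword \<Rightarrow> nat \<Rightarrow> real" where
  "nu_c w i = sum_list (map snd (drop i w))"

definition region :: "nat \<Rightarrow> real \<Rightarrow> real set" where
  "region \<kappa> v =
     (if v > real \<kappa> then {x. x > real \<kappa>}
      else if v \<in> \<nat> then {v}
      else {x. real_of_int \<lfloor>v\<rfloor> < x \<and> x < real_of_int \<lfloor>v\<rfloor> + 1})"

fun add_first :: "real \<Rightarrow> 'a tword \<Rightarrow> 'a tword" where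
  "add_first d [] = []"
| "add_first d ((\<sigma>, t) # e) = (\<sigma>, t + d) # e"

definition test :: "('a tword \<Rightarrow> bool) \<Rightarrow> 'a tword \<Rightarrow> 'a tword \<Rightarrow> nat \<Rightarrow> nat \<Rightarrow> 'a tword \<Rightarrow> bool" where
  "test MQ w1 w2 i1 i2 e =
     (if e = [] then MQ w1 = MQ w2
      else (let v1 = nu_c w1 i1; v2 = nu_c w2 i2; d = \<bar>v1 - v2\<bar>;
                e1 = (if v1 < v2 then add_first d e else e);
                e2 = (if v2 < v1 then add_first d e else e)
            in MQ (w1 @ e1) = MQ (w2 @ e2)))"

fun lcp_len :: "'a list \<Rightarrow> 'a list \<Rightarrow> nat" where
  "lcp_len (x # xs) (y # ys) = (if x = y then Suc (lcp_len xs ys) else 0)"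
| "lcp_len _ _ = 0"

definition valid_combs :: "'a tword \<Rightarrow> 'a tword \<Rightarrow> (nat \<times> nat) set" where
  "valid_combs w1 w2 = {(i1, i2). i1 \<le> length w1 \<and> i2 \<le> length w2 \<and>
      ((i1 \<le> lcp_len w1 w2 \<and> i2 \<le> lcp_len w1 w2) \<longrightarrow> i1 = i2)}"

definition ftab :: "('a tword \<Rightarrow> bool) \<Rightarrow> 'a tword set \<Rightarrow> 'a tword \<Rightarrow> 'a tword \<Rightarrow> nat \<Rightarrow> nat \<Rightarrow> bool" where
  "ftab MQ E w1 w2 i1 i2 \<longleftrightarrow> (\<forall>e \<in> E. test MQ w1 w2 i1 i2 e)"

definition obs_table :: "'a set \<Rightarrow> 'a tword set \<Rightarrow> 'a tword set \<Rightarrow> 'a tword set \<Rightarrow> 'a tword set \<Rightarrow> bool" where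
  "obs_table Alph S Sp R E \<longleftrightarrow>
     finite S \<and> finite Sp \<and> finite R \<and> finite E \<and>
     S \<inter> Sp = {} \<and> S \<inter> R = {} \<and> Sp \<inter> R = {} \<and>
     (\<forall>w \<in> S \<union> Sp \<union> R \<union> E. tword_over Alph w) \<and>
     (\<forall>w \<in> S \<union> Sp \<union> R. \<forall>i \<le> length w. take i w \<in> S \<union> Sp \<union> R) \<and>
     [] \<in> S \<and>
     (\<forall>w \<in> S \<union> Sp. \<forall>\<sigma> \<in> Alph. w @ [(\<sigma>, 0)] \<in> S \<union> Sp \<union> R) \<and>
     [] \<in> E"

definition lr :: "('a tword \<Rightarrow> bool) \<Rightarrow> 'a tword \<Rightarrow> nat \<Rightarrow> bool" where
  "lr b w i \<longleftrightarrow> b (take i w) \<and> (\<forall>j. i < j \<and> j \<le> length w \<longrightarrow> \<not> b (take j w))"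

definition LR :: "('a tword \<Rightarrow> bool) \<Rightarrow> 'a tword \<Rightarrow> 'a tword \<Rightarrow> nat \<Rightarrow> nat \<Rightarrow> bool" where
  "LR b w1 w2 i j \<longleftrightarrow> lr b w1 i \<and> lr b w2 j"

definition C1 :: "('a tword \<Rightarrow> bool) \<Rightarrow> 'a tword set \<Rightarrow> 'a tword set \<Rightarrow> 'a tword set \<Rightarrow> 'a tword set
                  \<Rightarrow> ('a tword \<Rightarrow> bool) \<Rightarrow> ('a tword \<Rightarrow> int) \<Rightarrow> bool" where
  "C1 MQ S Sp R E b q \<longleftrightarrow>
     (\<forall>w1 \<in> S \<union> Sp \<union> R. \<forall>w2 \<in> S \<union> Sp \<union> R. \<forall>(i, j) \<in> valid_combs w1 w2.
        \<not> ftab MQ E w1 w2 i j \<longrightarrow> (LR b w1 w2 i j \<longrightarrow> q w1 \<noteq> q w2))"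

definition C2 :: "nat \<Rightarrow> ('a tword \<Rightarrow> bool) \<Rightarrow> 'a tword set \<Rightarrow> 'a tword set \<Rightarrow> 'a tword set \<Rightarrow> 'a tword set
                  \<Rightarrow> ('a tword \<Rightarrow> bool) \<Rightarrow> ('a tword \<Rightarrow> int) \<Rightarrow> bool" where
  "C2 \<kappa> MQ S Sp R E b q \<longleftrightarrow>
     (\<forall>w1 w2 \<sigma> t1 t2 i j.
        w1 \<in> S \<union> Sp \<union> R \<and> w2 \<in> S \<union> Sp \<union> R \<and>
        w1 @ [(\<sigma>, t1)] \<in> S \<union> Sp \<union> R \<and> w2 @ [(\<sigma>, t2)] \<in> S \<union> Sp \<union> R \<and>
        (i, j) \<in> valid_combs w1 w2 \<and> ftab MQ E w1 w2 i j \<and>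
        region \<kappa> (nu_c w1 i + t1) = region \<kappa> (nu_c w2 j + t2) \<longrightarrow>
        ((q w1 = q w2 \<and> LR b w1 w2 i j) \<longrightarrow>
           (b (w1 @ [(\<sigma>, t1)]) = b (w2 @ [(\<sigma>, t2)]) \<and> q (w1 @ [(\<sigma>, t1)]) = q (w2 @ [(\<sigma>, t2)]))))"

definition C3 :: "nat \<Rightarrow> 'a tword set \<Rightarrow> 'a tword set \<Rightarrow> 'a tword set \<Rightarrow> ('a tword \<Rightarrow> int) \<Rightarrow> bool" where
  "C3 N S Sp R q \<longleftrightarrow>
     (\<forall>k::int. 1 \<le> k \<and> k \<le> int N \<longrightarrow> (\<exists>w \<in> S \<union> Sp. q w = k)) \<and>
     (\<forall>w \<in> S \<union> Sp \<union> R. 1 \<le> q w \<and> q w \<le> int N)"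

text \<open>\<open>enum\<close> is the fixed enumeration w_1, ..., w_|S| of S.\<close>
definition C4 :: "'a tword set \<Rightarrow> (nat \<Rightarrow> 'a tword) \<Rightarrow> ('a tword \<Rightarrow> int) \<Rightarrow> bool" where
  "C4 S enum q \<longleftrightarrow> (\<forall>k. 1 \<le> k \<and> k \<le> card S \<longrightarrow> q (enum k) = int k)"

text \<open>Guards: intervals with endpoints in N \<union> {\<infinity>}.  \<open>Guard lo lc hi hc\<close> is the interval with
  lower endpoint lo (closed iff lc) and upper endpoint hi (None = \<infinity>, always open; closed iff hc).\<close>
datatype guard = Guard nat bool "nat option" bool

fun guard_sat :: "guard \<Rightarrow> real \<Rightarrow> bool" where
  "guard_sat (Guard lo lc hi hc) v \<longleftrightarrow>
     (if lc then real lo \<le> v else real lo < v) \<and>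
     (case hi of None \<Rightarrow> True | Some h \<Rightarrow> (if hc then v \<le> real h else v < real h))"

type_synonym 'a trans = "int \<times> 'a \<times> guard \<times> bool \<times> int"

record 'a ota =
  locs :: "int set"
  init :: int
  accs :: "int set"
  trans :: "'a trans set"

definition is_OTA :: "'a set \<Rightarrow> 'a ota \<Rightarrow> bool" where
  "is_OTA Alph A \<longleftrightarrow> finite (locs A) \<and> init A \<in> locs A \<and> accs A \<subseteq> locs A \<and>
     finite (trans A) \<and>
     (\<forall>(p, \<sigma>, g, r, p') \<in> trans A. p \<in> locs A \<and> \<sigma> \<in> Alph \<and> p' \<in> locs A)"

definition deterministic :: "'a ota \<Rightarrow> bool" where
  "deterministic A \<longleftrightarrow>
     (\<forall>tr1 \<in> trans A. \<forall>tr2 \<in> trans A. case (tr1, tr2) of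
        ((p1, \<sigma>1, g1, r1, p1'), (p2, \<sigma>2, g2, r2, p2')) \<Rightarrow>
          tr1 \<noteq> tr2 \<and> p1 = p2 \<and> \<sigma>1 = \<sigma>2 \<longrightarrow> (\<forall>v. \<not> (guard_sat g1 v \<and> guard_sat g2 v)))"

inductive run :: "'a trans set \<Rightarrow> int \<Rightarrow> real \<Rightarrow> 'a tword \<Rightarrow> int \<Rightarrow> bool" for T where
  run_nil: "run T p v [] p"
| run_cons: "\<lbrakk>(p, \<sigma>, g, r, p') \<in> T; guard_sat g (v + t);
              run T p' (if r then 0 else v + t) w p''\<rbrakk> \<Longrightarrow> run T p v ((\<sigma>, t) # w) p''"

definition reaches :: "'a ota \<Rightarrow> 'a tword \<Rightarrow> int \<Rightarrow> bool" where
  "reaches A w p \<longleftrightarrow> run (trans A) (init A) 0 w p"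

definition accepts :: "'a ota \<Rightarrow> 'a tword \<Rightarrow> bool" where
  "accepts A w \<longleftrightarrow> (\<exists>p \<in> accs A. reaches A w p)"

text \<open>Clock value after w, computed with the resets b of its prefixes (b [] is assumed True).\<close>
definition clock_after :: "('a tword \<Rightarrow> bool) \<Rightarrow> 'a tword \<Rightarrow> real" where
  "clock_after b w = nu_c w (GREATEST i. i \<le> length w \<and> b (take i w))"

definition aux_trans :: "'a tword set \<Rightarrow> ('a tword \<Rightarrow> bool) \<Rightarrow> ('a tword \<Rightarrow> int)
                         \<Rightarrow> (int \<times> 'a \<times> real \<times> bool \<times> int) set" where
  "aux_trans T b q = {(q w, \<sigma>, clock_after b w + t, b (w @ [(\<sigma>, t)]), q (w @ [(\<sigma>, t)])) | w \<sigma> t.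
                        w \<in> T \<and> w @ [(\<sigma>, t)] \<in> T}"

definition aux_vals :: "'a tword set \<Rightarrow> ('a tword \<Rightarrow> bool) \<Rightarrow> ('a tword \<Rightarrow> int) \<Rightarrow> int \<Rightarrow> 'a \<Rightarrow> real list" where
  "aux_vals T b q p \<sigma> = sorted_list_of_set {\<psi>. \<exists>r p'. (p, \<sigma>, \<psi>, r, p') \<in> aux_trans T b q}"

text \<open>Partition function: guard from mu_i to mu_{i+1} (None = \<infinity>, treated as an integer).\<close>
definition part_guard :: "real \<Rightarrow> real option \<Rightarrow> guard" where
  "part_guard lo hi =
     Guard (nat \<lfloor>lo\<rfloor>) (lo \<in> \<nat>)
           (case hi of None \<Rightarrow> None | Some h \<Rightarrow> Some (nat \<lfloor>h\<rfloor>))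
           (case hi of None \<Rightarrow> False | Some h \<Rightarrow> h \<notin> \<nat>)"

text \<open>Guard g_i for the sorted list mu_0 < ... < mu_n, where mu_0 is taken to be 0 and mu_{n+1} = \<infinity>.\<close>
definition guard_of :: "real list \<Rightarrow> nat \<Rightarrow> guard" where
  "guard_of mus i = part_guard (if i = 0 then 0 else mus ! i)
                               (if Suc i < length mus then Some (mus ! Suc i) else None)"

definition hyp :: "('a tword \<Rightarrow> bool) \<Rightarrow> 'a tword set \<Rightarrow> 'a tword set \<Rightarrow> 'a tword set
                   \<Rightarrow> ('a tword \<Rightarrow> bool) \<Rightarrow> ('a tword \<Rightarrow> int) \<Rightarrow> 'a ota" where
  "hyp MQ S Sp R b q =
     \<lparr> locs = q ` (S \<union> Sp),
       init = q [],
       accs = q ` {w \<in> S \<union> Sp. MQ w},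
       trans = {(p, \<sigma>, guard_of (aux_vals (S \<union> Sp \<union> R) b q p \<sigma>) i, r, p') | p \<sigma> \<psi> r p' i.
                 (p, \<sigma>, \<psi>, r, p') \<in> aux_trans (S \<union> Sp \<union> R) b q \<and>
                 i < length (aux_vals (S \<union> Sp \<union> R) b q p \<sigma>) \<and>
                 aux_vals (S \<union> Sp \<union> R) b q p \<sigma> ! i = \<psi>} \<rparr>"

end

theory Submission
  imports Defs
begin


definition lowok :: "real \<Rightarrow> real \<Rightarrow> bool" where
  "lowok lo v = (if lo \<in> \<nat> then lo \<le> v else real_of_int \<lfloor>lo\<rfloor> < v)"
definition upok :: "real \<Rightarrow> real \<Rightarrow> bool" where
  "upok h v = (if h \<in> \<nat> then v < h else v \<le> real_of_int \<lfloor>h\<rfloor>)"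

lemma nats_floor: "(x::real) \<ge> 0 \<Longrightarrow> x \<in> \<nat> \<longleftrightarrow> real_of_int \<lfloor>x\<rfloor> = x"
proof
  assume "x \<in> \<nat>" then show "real_of_int \<lfloor>x\<rfloor> = x" by (metis Nats_cases floor_of_nat of_int_of_nat_eq)
next
  assume "x \<ge> 0" "real_of_int \<lfloor>x\<rfloor> = x"
  obtain k where k: "\<lfloor>x\<rfloor> = int k" using zero_le_imp_eq_int \<open>x \<ge> 0\<close> by (metis zero_le_floor)
  then have "x = real k" using \<open>real_of_int \<lfloor>x\<rfloor> = x\<close> by simp
  then show "x \<in> \<nat>" by (metis of_nat_in_Nats)
qed

lemma nat_fl1: "(x::real) \<in> \<nat> \<Longrightarrow> real (nat \<lfloor>x\<rfloor>) = x"
  by (auto elim: Nats_cases)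
lemma nat_fl3: "(x::real) \<in> \<nat> \<Longrightarrow> real_of_int \<lfloor>x\<rfloor> = x"
  by (metis Nats_cases floor_of_nat of_int_of_nat_eq)
lemma nat_fl2: "(x::real) \<ge> 0 \<Longrightarrow> real (nat \<lfloor>x\<rfloor>) = real_of_int \<lfloor>x\<rfloor>"
  by simp

lemma gs_None: "lo \<ge> 0 \<Longrightarrow> guard_sat (part_guard lo None) v \<longleftrightarrow> lowok lo v"
  by (simp add: part_guard_def lowok_def nat_fl3)

lemma gs_Some: "lo \<ge> 0 \<Longrightarrow> h \<ge> 0 \<Longrightarrow> guard_sat (part_guard lo (Some h)) v \<longleftrightarrow> lowok lo v \<and> upok h v"
  by (simp add: part_guard_def lowok_def upok_def nat_fl3)

lemma sep: assumes "upok h v" "lowok lo v" "h \<le> lo" "h \<ge> 0" "lo \<ge> 0" shows False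
proof (cases "h \<in> \<nat>")
  case True
  then have hf: "real_of_int \<lfloor>h\<rfloor> = h" using assms nats_floor by blast
  show ?thesis
  proof (cases "lo \<in> \<nat>")
    case True then show ?thesis using assms \<open>h \<in> \<nat>\<close> by (simp add: lowok_def upok_def)
  next
    case False
    have "\<lfloor>h\<rfloor> \<le> \<lfloor>lo\<rfloor>" using assms floor_mono by blast
    then show ?thesis using assms False \<open>h \<in> \<nat>\<close> hf by (simp add: lowok_def upok_def)
  qed
next
  case False
  show ?thesis
  proof (cases "lo \<in> \<nat>")
    case True
    then have v: "lo \<le> v" "v \<le> real_of_int \<lfloor>h\<rfloor>" using assms False by (auto simp: lowok_def upok_def)
    have "real_of_int \<lfloor>h\<rfloor> \<le> h" by simp
    then have "real_of_int \<lfloor>h\<rfloor> = h" using v assms by linarith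
    then show ?thesis using False nats_floor assms by blast
  next
    case False
    have "\<lfloor>h\<rfloor> \<le> \<lfloor>lo\<rfloor>" using assms floor_mono by blast
    then show ?thesis using assms False \<open>h \<notin> \<nat>\<close> by (simp add: lowok_def upok_def)
  qed
qed

lemma guard_disj:
  fixes mus :: "real list"
  assumes srt: "sorted_wrt (<) mus" and nn: "\<forall>x\<in>set mus. x \<ge> 0"
    and ii: "i < i'" "i' < length mus"
  shows "\<not> (guard_sat (guard_of mus i) v \<and> guard_sat (guard_of mus i') v)"
proof
  assume g: "guard_sat (guard_of mus i) v \<and> guard_sat (guard_of mus i') v"
  have s: "Suc i < length mus" using ii by simp
  have nnk: "\<And>k. k < length mus \<Longrightarrow> mus ! k \<ge> 0" using nn by auto
  have lo0: "(if i = 0 then 0 else mus ! i) \<ge> 0" using nnk ii by auto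
  have "upok (mus ! Suc i) v"
    using g s lo0 nnk[OF s] by (simp add: guard_of_def gs_Some)
  moreover have "lowok (mus ! i') v"
  proof (cases "Suc i' < length mus")
    case True then show ?thesis using g ii nnk[of i'] nnk[OF True]
      by (simp add: guard_of_def gs_Some)
  next
    case False then show ?thesis using g ii nnk[of i']
      by (simp add: guard_of_def gs_None)
  qed
  moreover have "mus ! Suc i \<le> mus ! i'"
  proof (cases "Suc i = i'")
    case False then show ?thesis using sorted_wrt_nth_less[OF srt, of "Suc i" i'] ii by simp
  qed simp
  ultimately show False using sep nnk s ii by blast
qed

lemma gt_kappa_iff: "(v::real) \<ge> 0 \<Longrightarrow> v \<notin> \<nat> \<Longrightarrow> v > real k \<longleftrightarrow> int k \<le> \<lfloor>v\<rfloor>"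
proof
  assume "v > real k" then show "int k \<le> \<lfloor>v\<rfloor>" by (simp add: le_floor_iff)
next
  assume a: "v \<ge> 0" "v \<notin> \<nat>" "int k \<le> \<lfloor>v\<rfloor>"
  then have "real k \<le> v" by (metis le_floor_iff of_int_of_nat_eq)
  moreover have "v \<noteq> real k" using a(2) by (metis of_nat_in_Nats)
  ultimately show "v > real k" by simp
qed

lemma region_same:
  assumes "(v::real) \<ge> 0" "v' \<ge> 0" "v \<notin> \<nat>" "v' \<notin> \<nat>" "\<lfloor>v\<rfloor> = \<lfloor>v'\<rfloor>"
  shows "region k v = region k v'"
proof -
  have "v > real k \<longleftrightarrow> v' > real k" using gt_kappa_iff assms by metis
  then show ?thesis using assms by (simp add: region_def)
qed

lemma guard_cover:
  fixes mus :: "real list"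
  assumes srt: "sorted_wrt (<) mus" and nn: "\<forall>x\<in>set mus. x \<ge> 0"
    and k: "k < length mus"
  shows "\<exists>i<length mus. guard_sat (guard_of mus i) (mus ! k) \<and> region \<kappa> (mus ! i) = region \<kappa> (mus ! k)"
proof -
  have nnk: "\<And>k. k < length mus \<Longrightarrow> mus ! k \<ge> 0" using nn by auto
  have lt: "\<And>i j. i < j \<Longrightarrow> j < length mus \<Longrightarrow> mus ! i < mus ! j"
    using sorted_wrt_nth_less[OF srt] by blast
  have le: "\<And>i j. i \<le> j \<Longrightarrow> j < length mus \<Longrightarrow> mus ! i \<le> mus ! j"
    using lt by (metis order.order_iff_strict order.strict_implies_order)
  define v where "v = mus ! k"
  have v0: "v \<ge> 0" using nnk k v_def by simp
  show ?thesis
  proof (cases "v \<in> \<nat>")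
    case True
    have lo: "lowok (if k = 0 then 0 else mus ! k) v" using True v0 v_def by (cases "k = 0") (simp_all add: lowok_def)
    have lo0: "(if k = 0 then 0 else mus ! k) \<ge> 0" using v0 v_def by simp
    have "guard_sat (guard_of mus k) v"
    proof (cases "Suc k < length mus")
      case True
      have h: "v < mus ! Suc k" using lt True v_def by simp
      have "upok (mus ! Suc k) v"
      proof (cases "mus ! Suc k \<in> \<nat>")
        case False
        have "real_of_int \<lfloor>v\<rfloor> = v" using \<open>v \<in> \<nat>\<close> nat_fl3 by blast
        then have "v \<le> real_of_int \<lfloor>mus ! Suc k\<rfloor>" using h
          by (metis floor_mono less_imp_le of_int_le_iff)
        then show ?thesis using False by (simp add: upok_def)
      qed (use h in \<open>simp add: upok_def\<close>)
      then show ?thesis using True lo lo0 nnk[OF True] by (simp add: guard_of_def gs_Some)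
    next
      case False
      then show ?thesis using lo lo0 by (simp add: guard_of_def gs_None)
    qed
    then show ?thesis using k v_def by blast
  next
    case False
    define n where "n = \<lfloor>v\<rfloor>"
    have vn: "real_of_int n < v" "v < real_of_int n + 1"
    proof -
      have "real_of_int n \<le> v" using n_def by simp
      moreover have "real_of_int n \<noteq> v"
      proof
        assume "real_of_int n = v"
        then have "real_of_int \<lfloor>v\<rfloor> = v" by (simp add: n_def)
        then show False using False nats_floor[OF v0] by blast
      qed
      ultimately show "real_of_int n < v" by simp
      show "v < real_of_int n + 1" using n_def by linarith
    qed
    define P where "P = (\<lambda>j. j < length mus \<and> mus ! j < real_of_int n + 1)"
    define i where "i = (GREATEST j. P j)"
    have Pk: "P k" using k vn v_def P_def by simp
    have bnd: "\<And>j. P j \<Longrightarrow> j \<le> length mus" using P_def by simp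
    have Pi: "P i" using GreatestI_nat[of P k, OF Pk bnd] i_def by simp
    have ki: "k \<le> i" using Greatest_le_nat[of P k, OF Pk bnd] i_def by simp
    have il: "i < length mus" using Pi P_def by simp
    have vi: "v \<le> mus ! i" using le[OF ki il] v_def by simp
    have mi: "real_of_int n < mus ! i" "mus ! i < real_of_int n + 1" using vi vn Pi P_def by auto
    have fi: "\<lfloor>mus ! i\<rfloor> = n" using mi by linarith
    have ni: "mus ! i \<notin> \<nat>"
    proof
      assume "mus ! i \<in> \<nat>"
      then have "real_of_int \<lfloor>mus ! i\<rfloor> = mus ! i" using nat_fl3 by blast
      then show False using fi mi by simp
    qed
    have lo0: "(if i = 0 then 0 else mus ! i) \<ge> 0" using nnk il by simp
    have lo: "lowok (if i = 0 then 0 else mus ! i) v"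
      using v0 vn ni fi by (simp add: lowok_def)
    have "guard_sat (guard_of mus i) v"
    proof (cases "Suc i < length mus")
      case True
      have "\<not> P (Suc i)"
      proof
        assume "P (Suc i)"
        then have "Suc i \<le> i" using Greatest_le_nat[of P "Suc i", OF _ bnd] i_def by simp
        then show False by simp
      qed
      then have h: "mus ! Suc i \<ge> real_of_int n + 1" using True P_def by simp
      then have "\<lfloor>mus ! Suc i\<rfloor> \<ge> n + 1" by (metis le_floor_iff of_int_1 of_int_add)
      then have "upok (mus ! Suc i) v" using h vn by (simp add: upok_def)
      then show ?thesis using True lo lo0 nnk[OF True] by (simp add: guard_of_def gs_Some)
    next
      case False
      then show ?thesis using lo lo0 by (simp add: guard_of_def gs_None)
    qed
    moreover have "region \<kappa> (mus ! i) = region \<kappa> v"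
      using region_same[of "mus ! i" v \<kappa>] nnk[OF il] v0 ni False fi n_def by simp
    ultimately show ?thesis using il v_def by blast
  qed
qed



definition lst :: "('a tword \<Rightarrow> bool) \<Rightarrow> 'a tword \<Rightarrow> nat" where
  "lst b w = (GREATEST i. i \<le> length w \<and> b (take i w))"

lemma lst_props:
  assumes "b [] = True"
  shows "lst b w \<le> length w \<and> b (take (lst b w) w) \<and> (\<forall>j. lst b w < j \<and> j \<le> length w \<longrightarrow> \<not> b (take j w))"
proof -
  let ?P = "\<lambda>i. i \<le> length w \<and> b (take i w)"
  have P0: "?P 0" using assms by simp
  have bnd: "\<And>i. ?P i \<Longrightarrow> i \<le> length w" by simp
  have "?P (lst b w)" unfolding lst_def using GreatestI_nat[of ?P 0, OF P0 bnd] .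
  moreover have "\<forall>j. lst b w < j \<and> j \<le> length w \<longrightarrow> \<not> b (take j w)"
    using Greatest_le_nat[of ?P _ "length w"] unfolding lst_def by fastforce
  ultimately show ?thesis by blast
qed

lemma lr_lst: "b [] = True \<Longrightarrow> lr b w (lst b w)"
  using lst_props[of b w] by (simp add: lr_def)

lemma lr_unique: assumes "b [] = True" "lr b w i" "i \<le> length w" shows "i = lst b w"
proof -
  have "i \<le> lst b w"
    using Greatest_le_nat[of "\<lambda>i. i \<le> length w \<and> b (take i w)" i "length w"] assms
    unfolding lst_def lr_def by blast
  moreover have "\<not> i < lst b w" using assms lst_props[of b w] unfolding lr_def by blast
  ultimately show ?thesis by simp
qed

lemma nu_c_ge: "length w \<le> i \<Longrightarrow> nu_c w i = 0"
  by (simp add: nu_c_def)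

lemma lr_nu: assumes "b [] = True" "lr b w i" shows "nu_c w i = nu_c w (lst b w)"
proof (cases "i \<le> length w")
  case True then show ?thesis using lr_unique assms by metis
next
  case False
  then have "b w" using assms(2) by (simp add: lr_def)
  then have "lr b w (length w)" by (simp add: lr_def)
  then have "length w = lst b w" using lr_unique assms(1) by blast
  then show ?thesis using False nu_c_ge by (metis le_refl nat_le_linear)
qed

lemma ca_eq: "clock_after b w = nu_c w (lst b w)"
  by (simp add: clock_after_def lst_def)

lemma ca_nil: "clock_after b [] = 0"
  by (simp add: clock_after_def nu_c_def)

lemma ca_snoc:
  assumes "b [] = True"
  shows "clock_after b (w @ [(\<sigma>, t)]) = (if b (w @ [(\<sigma>, t)]) then 0 else clock_after b w + t)"
proof (cases "b (w @ [(\<sigma>, t)])")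
  case True
  then have "lr b (w @ [(\<sigma>, t)]) (length (w @ [(\<sigma>, t)]))" by (auto simp add: lr_def)
  then have "lst b (w @ [(\<sigma>, t)]) = length (w @ [(\<sigma>, t)])" using lr_unique assms by (metis le_refl)
  then show ?thesis using True by (simp add: ca_eq nu_c_def)
next
  case False
  have eq: "(\<lambda>i. i \<le> length (w @ [(\<sigma>, t)]) \<and> b (take i (w @ [(\<sigma>, t)]))) = (\<lambda>i. i \<le> length w \<and> b (take i w))"
  proof
    fix i show "(i \<le> length (w @ [(\<sigma>, t)]) \<and> b (take i (w @ [(\<sigma>, t)]))) = (i \<le> length w \<and> b (take i w))"
      using False by (cases "i \<le> length w") auto
  qed
  have l: "lst b (w @ [(\<sigma>, t)]) = lst b w" unfolding lst_def eq ..
  have "lst b w \<le> length w" using lst_props assms by blast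
  then show ?thesis using False l by (simp add: ca_eq nu_c_def)
qed

lemma ftab_cong:
  "nu_c w1 i = nu_c w1 i' \<Longrightarrow> nu_c w2 j = nu_c w2 j' \<Longrightarrow> ftab MQ E w1 w2 i j = ftab MQ E w1 w2 i' j'"
  by (simp add: ftab_def test_def)

lemma lcp_take: "k \<le> lcp_len xs ys \<Longrightarrow> take k xs = take k ys"
proof (induction xs ys arbitrary: k rule: lcp_len.induct)
  case (1 x xs y ys)
  then show ?case by (cases k) (auto split: if_splits)
qed auto

lemma lcp_le: "lcp_len xs ys \<le> length xs"
  by (induction xs ys rule: lcp_len.induct) auto

lemma lcp_le2: "lcp_len xs ys \<le> length ys"
  by (induction xs ys rule: lcp_len.induct) auto

lemma lr_valid:
  assumes b0: "b [] = True" and l1: "lr b w1 i" and l2: "lr b w2 j"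
    and i: "i \<le> length w1" and j: "j \<le> length w2"
  shows "(i, j) \<in> valid_combs w1 w2"
proof -
  have "i = j" if m: "i \<le> lcp_len w1 w2" "j \<le> lcp_len w1 w2"
  proof (rule ccontr)
    assume "i \<noteq> j"
    then consider "i < j" | "j < i" by linarith
    then show False
    proof cases
      case 1
      have "take j w1 = take j w2" using lcp_take m by blast
      moreover have "j \<le> length w1" using m(2) lcp_le[of w1 w2] by linarith
      ultimately show False using l1 l2 1 by (auto simp: lr_def)
    next
      case 2
      have "take i w1 = take i w2" using lcp_take m by blast
      moreover have "i \<le> length w2" using m(1) lcp_le2[of w1 w2] by linarith
      ultimately show False using l1 l2 2 j by (auto simp: lr_def)
    qed
  qed
  then show ?thesis using i j by (simp add: valid_combs_def)
qed



locale hctx =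
  fixes Alph :: "'a set" and MQ :: "'a tword \<Rightarrow> bool" and S Sp R E :: "'a tword set"
    and N \<kappa> :: nat and b :: "'a tword \<Rightarrow> bool" and q :: "'a tword \<Rightarrow> int"
  assumes obs: "obs_table Alph S Sp R E" and b0: "b [] = True"
    and c1: "C1 MQ S Sp R E b q" and c2: "C2 \<kappa> MQ S Sp R E b q" and c3: "C3 N S Sp R q"
begin

abbreviation "T \<equiv> S \<union> Sp \<union> R"
abbreviation "H \<equiv> hyp MQ S Sp R b q"
abbreviation "A \<equiv> aux_trans T b q"

lemma finT: "finite T" using obs by (simp add: obs_table_def)

lemma prefT: "w \<in> T \<Longrightarrow> i \<le> length w \<Longrightarrow> take i w \<in> T"
  using obs unfolding obs_table_def by blast

lemma snocT: "w @ [x] \<in> T \<Longrightarrow> w \<in> T"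
  using prefT[of "w @ [x]" "length w"] by simp

lemma tw: "w \<in> T \<Longrightarrow> (\<sigma>, t) \<in> set w \<Longrightarrow> \<sigma> \<in> Alph \<and> t \<ge> 0"
  using obs unfolding obs_table_def tword_over_def by blast

lemma nu_nonneg: assumes "w \<in> T" shows "nu_c w i \<ge> 0"
proof -
  have "\<forall>x\<in>set (map snd (drop i w)). 0 \<le> x"
    using tw[OF assms] set_drop_subset[of i w] by fastforce
  then show ?thesis unfolding nu_c_def by (intro sum_list_nonneg) auto
qed

lemma ca_nonneg: "w \<in> T \<Longrightarrow> clock_after b w \<ge> 0"
  using nu_nonneg by (simp add: ca_eq)

lemma same_ftab:
  assumes "w1 \<in> T" "w2 \<in> T" "q w1 = q w2"
  shows "ftab MQ E w1 w2 (lst b w1) (lst b w2)"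
proof -
  have v: "(lst b w1, lst b w2) \<in> valid_combs w1 w2"
    using lr_valid[of b, OF b0 lr_lst[of b, OF b0] lr_lst[of b, OF b0]] lst_props[of b, OF b0] by blast
  have "LR b w1 w2 (lst b w1) (lst b w2)" using lr_lst[of b, OF b0] by (simp add: LR_def)
  moreover have "\<forall>(i, j) \<in> valid_combs w1 w2. \<not> ftab MQ E w1 w2 i j \<longrightarrow> (LR b w1 w2 i j \<longrightarrow> q w1 \<noteq> q w2)"
    using c1 assms(1,2) unfolding C1_def by blast
  then have "\<not> ftab MQ E w1 w2 (lst b w1) (lst b w2) \<longrightarrow> (LR b w1 w2 (lst b w1) (lst b w2) \<longrightarrow> q w1 \<noteq> q w2)"
    using bspec[OF _ v] by fastforce
  ultimately show ?thesis using assms(3) by blast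
qed

lemma same_MQ: assumes "w1 \<in> T" "w2 \<in> T" "q w1 = q w2" shows "MQ w1 = MQ w2"
proof -
  have "[] \<in> E" using obs by (simp add: obs_table_def)
  then show ?thesis using same_ftab[OF assms] by (simp add: ftab_def test_def)
qed

lemma succ_same:
  assumes "w1 \<in> T" "w2 \<in> T" "w1 @ [(\<sigma>, t1)] \<in> T" "w2 @ [(\<sigma>, t2)] \<in> T" "q w1 = q w2"
    "region \<kappa> (clock_after b w1 + t1) = region \<kappa> (clock_after b w2 + t2)"
  shows "b (w1 @ [(\<sigma>, t1)]) = b (w2 @ [(\<sigma>, t2)]) \<and> q (w1 @ [(\<sigma>, t1)]) = q (w2 @ [(\<sigma>, t2)])"
proof -
  have v: "(lst b w1, lst b w2) \<in> valid_combs w1 w2"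
    using lr_valid[of b, OF b0 lr_lst[of b, OF b0] lr_lst[of b, OF b0]] lst_props[of b, OF b0] by blast
  have l: "LR b w1 w2 (lst b w1) (lst b w2)" using lr_lst[of b, OF b0] by (simp add: LR_def)
  have f: "ftab MQ E w1 w2 (lst b w1) (lst b w2)" using same_ftab assms by blast
  have r: "region \<kappa> (nu_c w1 (lst b w1) + t1) = region \<kappa> (nu_c w2 (lst b w2) + t2)"
    using assms(6) by (simp add: ca_eq)
  have c: "w1 \<in> T \<and> w2 \<in> T \<and>
        w1 @ [(\<sigma>, t1)] \<in> T \<and> w2 @ [(\<sigma>, t2)] \<in> T \<and>
        (lst b w1, lst b w2) \<in> valid_combs w1 w2 \<and> ftab MQ E w1 w2 (lst b w1) (lst b w2) \<and>
        region \<kappa> (nu_c w1 (lst b w1) + t1) = region \<kappa> (nu_c w2 (lst b w2) + t2) \<longrightarrow>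
        ((q w1 = q w2 \<and> LR b w1 w2 (lst b w1) (lst b w2)) \<longrightarrow>
           (b (w1 @ [(\<sigma>, t1)]) = b (w2 @ [(\<sigma>, t2)]) \<and> q (w1 @ [(\<sigma>, t1)]) = q (w2 @ [(\<sigma>, t2)])))"
    using c2 unfolding C2_def by (elim allE)
  show ?thesis by (rule c[rule_format]) (use assms v l f r in simp_all)
qed

lemma aux_mem: "(p, \<sigma>, \<psi>, r, p') \<in> A \<longleftrightarrow>
  (\<exists>w t. w \<in> T \<and> w @ [(\<sigma>, t)] \<in> T \<and> p = q w \<and> \<psi> = clock_after b w + t \<and>
     r = b (w @ [(\<sigma>, t)]) \<and> p' = q (w @ [(\<sigma>, t)]))"
  unfolding aux_trans_def by blast

lemma aux_func:
  assumes "(p, \<sigma>, \<psi>, r, p') \<in> A" "(p, \<sigma>, \<psi>', r', p'') \<in> A" "region \<kappa> \<psi> = region \<kappa> \<psi>'"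
  shows "r = r' \<and> p' = p''"
proof -
  obtain w1 t1 where 1: "w1 \<in> T" "w1 @ [(\<sigma>, t1)] \<in> T" "p = q w1" "\<psi> = clock_after b w1 + t1"
     "r = b (w1 @ [(\<sigma>, t1)])" "p' = q (w1 @ [(\<sigma>, t1)])" using assms(1) aux_mem by blast
  obtain w2 t2 where 2: "w2 \<in> T" "w2 @ [(\<sigma>, t2)] \<in> T" "p = q w2" "\<psi>' = clock_after b w2 + t2"
     "r' = b (w2 @ [(\<sigma>, t2)])" "p'' = q (w2 @ [(\<sigma>, t2)])" using assms(2) aux_mem by blast
  show ?thesis using succ_same[OF 1(1) 2(1) 1(2) 2(2)] 1 2 assms(3) by simp
qed

lemma aux_nonneg: "(p, \<sigma>, \<psi>, r, p') \<in> A \<Longrightarrow> \<psi> \<ge> 0"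
  using aux_mem ca_nonneg tw by (metis add_nonneg_nonneg in_set_conv_decomp)

lemma finA: "finite A"
proof -
  have "A \<subseteq> (\<lambda>(w, w'). (q w, fst (last w'), clock_after b w + snd (last w'), b w', q w')) ` (T \<times> T)"
  proof
    fix x assume "x \<in> A"
    then obtain w \<sigma> t where "x = (q w, \<sigma>, clock_after b w + t, b (w @ [(\<sigma>, t)]), q (w @ [(\<sigma>, t)]))"
      "w \<in> T" "w @ [(\<sigma>, t)] \<in> T" unfolding aux_trans_def by blast
    then show "x \<in> (\<lambda>(w, w'). (q w, fst (last w'), clock_after b w + snd (last w'), b w', q w')) ` (T \<times> T)"
      by (auto intro!: image_eqI[where x="(w, w @ [(\<sigma>, t)])"])
  qed
  then show ?thesis using finT finite_subset by blast
qed

definition V :: "int \<Rightarrow> 'a \<Rightarrow> real set" where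
  "V p \<sigma> = {\<psi>. \<exists>r p'. (p, \<sigma>, \<psi>, r, p') \<in> A}"

lemma finV: "finite (V p \<sigma>)"
proof -
  have "V p \<sigma> \<subseteq> (\<lambda>x. fst (snd (snd x))) ` A" unfolding V_def by force
  then show ?thesis using finA finite_subset by blast
qed

lemma mus_set: "set (aux_vals T b q p \<sigma>) = V p \<sigma>"
  using finV unfolding aux_vals_def V_def by simp

lemma mus_sorted: "sorted_wrt (<) (aux_vals T b q p \<sigma>)"
  unfolding aux_vals_def by (rule strict_sorted_list_of_set)

lemma mus_nonneg: "\<forall>x\<in>set (aux_vals T b q p \<sigma>). x \<ge> 0"
  using mus_set aux_nonneg unfolding V_def by blast

lemma trans_mem: "tr \<in> trans H \<longleftrightarrow> (\<exists>p \<sigma> \<psi> r p' i. tr = (p, \<sigma>, guard_of (aux_vals T b q p \<sigma>) i, r, p') \<and>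
   (p, \<sigma>, \<psi>, r, p') \<in> A \<and> i < length (aux_vals T b q p \<sigma>) \<and> aux_vals T b q p \<sigma> ! i = \<psi>)"
  unfolding hyp_def by simp

lemma det: "deterministic H"
  unfolding deterministic_def
proof (intro ballI)
  fix tr1 tr2 assume t1: "tr1 \<in> trans H" and t2: "tr2 \<in> trans H"
  obtain p1 \<sigma>1 \<psi>1 r1 p1' i1 where a: "tr1 = (p1, \<sigma>1, guard_of (aux_vals T b q p1 \<sigma>1) i1, r1, p1')"
     "(p1, \<sigma>1, \<psi>1, r1, p1') \<in> A" "i1 < length (aux_vals T b q p1 \<sigma>1)" "aux_vals T b q p1 \<sigma>1 ! i1 = \<psi>1"
    using t1 trans_mem by blast
  obtain p2 \<sigma>2 \<psi>2 r2 p2' i2 where c: "tr2 = (p2, \<sigma>2, guard_of (aux_vals T b q p2 \<sigma>2) i2, r2, p2')"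
     "(p2, \<sigma>2, \<psi>2, r2, p2') \<in> A" "i2 < length (aux_vals T b q p2 \<sigma>2)" "aux_vals T b q p2 \<sigma>2 ! i2 = \<psi>2"
    using t2 trans_mem by blast
  have "\<forall>v. \<not> (guard_sat (guard_of (aux_vals T b q p1 \<sigma>1) i1) v \<and> guard_sat (guard_of (aux_vals T b q p1 \<sigma>1) i2) v)"
    if ne: "tr1 \<noteq> tr2" and eq: "p1 = p2" "\<sigma>1 = \<sigma>2"
  proof (cases "i1 = i2")
    case True
    then have "\<psi>1 = \<psi>2" using a c eq by simp
    then have "r1 = r2 \<and> p1' = p2'" using aux_func a(2) c(2) eq by blast
    then have False using ne a c eq True by simp
    then show ?thesis ..
  next
    case False
    then consider "i1 < i2" | "i2 < i1" by linarith
    then show ?thesis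
    proof cases
      case 1 then show ?thesis using guard_disj[OF mus_sorted mus_nonneg 1] c(3) eq by blast
    next
      case 2 then show ?thesis using guard_disj[OF mus_sorted mus_nonneg 2] a(3) eq by blast
    qed
  qed
  then show "case (tr1, tr2) of ((p1, \<sigma>1, g1, r1, p1'), (p2, \<sigma>2, g2, r2, p2')) \<Rightarrow>
          tr1 \<noteq> tr2 \<and> p1 = p2 \<and> \<sigma>1 = \<sigma>2 \<longrightarrow> (\<forall>v. \<not> (guard_sat g1 v \<and> guard_sat g2 v))"
    using a(1) c(1) by auto
qed

end


lemma run_nil_iff: "run TT x v [] p \<longleftrightarrow> p = x"
  by (auto elim: run.cases intro: run.intros)

lemma run_cons_iff: "run TT x v ((\<sigma>, t) # w) p \<longleftrightarrow>
  (\<exists>g r p'. (x, \<sigma>, g, r, p') \<in> TT \<and> guard_sat g (v + t) \<and> run TT p' (if r then 0 else v + t) w p)"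
proof
  assume "run TT x v ((\<sigma>, t) # w) p"
  then show "\<exists>g r p'. (x, \<sigma>, g, r, p') \<in> TT \<and> guard_sat g (v + t) \<and> run TT p' (if r then 0 else v + t) w p"
    by (cases rule: run.cases) blast+
qed (auto intro: run.intros)

context hctx begin

lemma inlocs: "w \<in> T \<Longrightarrow> q w \<in> q ` (S \<union> Sp)"
  using c3 unfolding C3_def by (metis image_eqI)

lemma is_ota: "is_OTA Alph H"
proof -
  have f1: "finite (q ` (S \<union> Sp))" using finT by simp
  have i1: "q [] \<in> q ` (S \<union> Sp)" using obs by (simp add: obs_table_def)
  define M where "M = card ((\<lambda>x. fst (snd (snd x))) ` A)"
  have lenM: "length (aux_vals T b q p \<sigma>) \<le> M" for p \<sigma>
  proof -
    have "V p \<sigma> \<subseteq> (\<lambda>x. fst (snd (snd x))) ` A" unfolding V_def by force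
    then have "card (V p \<sigma>) \<le> M" unfolding M_def using finA by (simp add: card_mono)
    then show ?thesis using mus_set finV by (metis distinct_card strict_sorted_iff mus_sorted)
  qed
  have "trans H \<subseteq> (\<lambda>(x, i). case x of (p, \<sigma>, \<psi>, r, p') \<Rightarrow> (p, \<sigma>, guard_of (aux_vals T b q p \<sigma>) i, r, p')) ` (A \<times> {..<M})"
  proof
    fix tr assume "tr \<in> trans H"
    then obtain p \<sigma> \<psi> r p' i where a: "tr = (p, \<sigma>, guard_of (aux_vals T b q p \<sigma>) i, r, p')"
     "(p, \<sigma>, \<psi>, r, p') \<in> A" "i < length (aux_vals T b q p \<sigma>)"
      using trans_mem by blast
    then have "i < M" using lenM[of p \<sigma>] by simp
    then show "tr \<in> (\<lambda>(x, i). case x of (p, \<sigma>, \<psi>, r, p') \<Rightarrow> (p, \<sigma>, guard_of (aux_vals T b q p \<sigma>) i, r, p')) ` (A \<times> {..<M})"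
      using a by (auto intro!: image_eqI[where x="((p, \<sigma>, \<psi>, r, p'), i)"])
  qed
  then have f2: "finite (trans H)" using finA by (meson finite_SigmaI finite_imageI finite_lessThan finite_subset)
  have tr: "\<forall>(p, \<sigma>, g, r, p') \<in> trans H. p \<in> q ` (S \<union> Sp) \<and> \<sigma> \<in> Alph \<and> p' \<in> q ` (S \<union> Sp)"
  proof (clarify)
    fix p \<sigma> g r p' assume "(p, \<sigma>, g, r, p') \<in> trans H"
    then obtain \<psi> where "(p, \<sigma>, \<psi>, r, p') \<in> A" using trans_mem by blast
    then obtain w t where w: "w \<in> T" "w @ [(\<sigma>, t)] \<in> T" "p = q w" "p' = q (w @ [(\<sigma>, t)])"
      using aux_mem by blast
    have "\<sigma> \<in> Alph" using tw[OF w(2), of \<sigma> t] by simp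
    then show "p \<in> q ` (S \<union> Sp) \<and> \<sigma> \<in> Alph \<and> p' \<in> q ` (S \<union> Sp)" using inlocs w by simp
  qed
  show ?thesis unfolding is_OTA_def using f1 i1 f2 tr by (simp add: hyp_def) blast
qed

lemma step_exists:
  assumes u: "u \<in> T" "u @ [(\<sigma>, t)] \<in> T"
  shows "\<exists>g. (q u, \<sigma>, g, b (u @ [(\<sigma>, t)]), q (u @ [(\<sigma>, t)])) \<in> trans H \<and> guard_sat g (clock_after b u + t)"
proof -
  let ?\<psi> = "clock_after b u + t" and ?p = "q u" and ?mus = "aux_vals T b q (q u) \<sigma>"
  have a: "(?p, \<sigma>, ?\<psi>, b (u @ [(\<sigma>, t)]), q (u @ [(\<sigma>, t)])) \<in> A" using aux_mem u by blast
  then have "?\<psi> \<in> set ?mus" using mus_set unfolding V_def by blast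
  then obtain k where k: "k < length ?mus" "?mus ! k = ?\<psi>" by (metis in_set_conv_nth)
  obtain i where i: "i < length ?mus" "guard_sat (guard_of ?mus i) (?mus ! k)" "region \<kappa> (?mus ! i) = region \<kappa> (?mus ! k)"
    using guard_cover[OF mus_sorted mus_nonneg k(1)] by blast
  have "?mus ! i \<in> V ?p \<sigma>" using mus_set i(1) by (metis nth_mem)
  then obtain r' p'' where a2: "(?p, \<sigma>, ?mus ! i, r', p'') \<in> A" unfolding V_def by blast
  have "r' = b (u @ [(\<sigma>, t)]) \<and> p'' = q (u @ [(\<sigma>, t)])" using aux_func[OF a2 a] i(3) k(2) by simp
  then have "(?p, \<sigma>, guard_of ?mus i, b (u @ [(\<sigma>, t)]), q (u @ [(\<sigma>, t)])) \<in> trans H"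
    using trans_mem a2 i(1) by blast
  then show ?thesis using i(2) k(2) by auto
qed

lemma step_unique:
  assumes u: "u \<in> T" "u @ [(\<sigma>, t)] \<in> T"
    and tr: "(q u, \<sigma>, g, r, p') \<in> trans H" "guard_sat g (clock_after b u + t)"
  shows "r = b (u @ [(\<sigma>, t)]) \<and> p' = q (u @ [(\<sigma>, t)])"
proof (rule ccontr)
  assume ne: "\<not> ?thesis"
  obtain g0 where g0: "(q u, \<sigma>, g0, b (u @ [(\<sigma>, t)]), q (u @ [(\<sigma>, t)])) \<in> trans H"
    "guard_sat g0 (clock_after b u + t)" using step_exists[OF u] by blast
  have "(q u, \<sigma>, g, r, p') \<noteq> (q u, \<sigma>, g0, b (u @ [(\<sigma>, t)]), q (u @ [(\<sigma>, t)]))" using ne by auto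
  then show False using det tr g0 unfolding deterministic_def by fastforce
qed

lemma run_char:
  "u @ w \<in> T \<Longrightarrow> run (trans H) (q u) (clock_after b u) w p \<longleftrightarrow> p = q (u @ w)"
proof (induction w arbitrary: u)
  case Nil
  then show ?case by (simp add: run_nil_iff)
next
  case (Cons x w)
  obtain \<sigma> t where x: "x = (\<sigma>, t)" by (cases x)
  let ?u' = "u @ [(\<sigma>, t)]"
  have uw: "?u' @ w \<in> T" using Cons.prems x by simp
  have u': "?u' \<in> T" using prefT[OF uw, of "length ?u'"] by simp
  have u: "u \<in> T" using snocT[OF u'] .
  have ca: "clock_after b ?u' = (if b ?u' then 0 else clock_after b u + t)" using ca_snoc[of b, OF b0] .
  show ?case
  proof
    assume "run (trans H) (q u) (clock_after b u) (x # w) p"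
    then have "\<exists>g r p'. (q u, \<sigma>, g, r, p') \<in> trans H \<and> guard_sat g (clock_after b u + t) \<and>
      run (trans H) p' (if r then 0 else clock_after b u + t) w p" by (simp only: x run_cons_iff)
    then obtain g r p' where g: "(q u, \<sigma>, g, r, p') \<in> trans H" "guard_sat g (clock_after b u + t)"
      "run (trans H) p' (if r then 0 else clock_after b u + t) w p" by blast
    then have "r = b ?u' \<and> p' = q ?u'" using step_unique[OF u u' g(1) g(2)] by simp
    then have "run (trans H) (q ?u') (clock_after b ?u') w p" using g(3) ca by simp
    then show "p = q (u @ x # w)" using Cons.IH[OF uw] x by simp
  next
    assume p: "p = q (u @ x # w)"
    obtain g where g: "(q u, \<sigma>, g, b ?u', q ?u') \<in> trans H" "guard_sat g (clock_after b u + t)"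
      using step_exists[OF u u'] by blast
    have "run (trans H) (q ?u') (clock_after b ?u') w p" using Cons.IH[OF uw] p x by simp
    then have "run (trans H) (q ?u') (if b ?u' then 0 else clock_after b u + t) w p" using ca by simp
    then have "\<exists>g r p'. (q u, \<sigma>, g, r, p') \<in> trans H \<and> guard_sat g (clock_after b u + t) \<and>
      run (trans H) p' (if r then 0 else clock_after b u + t) w p"
      using g by (intro exI[of _ g] exI[of _ "b ?u'"] exI[of _ "q ?u'"] conjI)
    then show "run (trans H) (q u) (clock_after b u) (x # w) p" by (simp only: x run_cons_iff)
  qed
qed

lemma reaches_iff: "w \<in> T \<Longrightarrow> reaches H w p \<longleftrightarrow> p = q w"
  using run_char[of "[]" w p] unfolding reaches_def by (simp add: hyp_def ca_nil)

end

theorem theorem1: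
  fixes Alph :: "'a set" and MQ :: "'a tword \<Rightarrow> bool"
    and S Sp R E :: "'a tword set" and N \<kappa> :: nat
    and b :: "'a tword \<Rightarrow> bool" and q :: "'a tword \<Rightarrow> int"
    and enum :: "nat \<Rightarrow> 'a tword"
  assumes "finite Alph"
    and "obs_table Alph S Sp R E"
    and "bij_betw enum {1..card S} S"
    and "b [] = True"
    and "C1 MQ S Sp R E b q"
    and "C2 \<kappa> MQ S Sp R E b q"
    and "C3 N S Sp R q"
    and "C4 S enum q"
  shows "is_OTA Alph (hyp MQ S Sp R b q) \<and> deterministic (hyp MQ S Sp R b q)
    \<and> (\<forall>w \<in> S \<union> Sp \<union> R. accepts (hyp MQ S Sp R b q) w \<longleftrightarrow> MQ w)
    \<and> (\<forall>w1 \<in> S \<union> Sp \<union> R. \<forall>w2 \<in> S \<union> Sp \<union> R. \<forall>i1 i2.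
          lr b w1 i1 \<and> lr b w2 i2 \<and> \<not> ftab MQ E w1 w2 i1 i2 \<longrightarrow>
            q w1 \<noteq> q w2
            \<and> (\<exists>p1. reaches (hyp MQ S Sp R b q) w1 p1)
            \<and> (\<exists>p2. reaches (hyp MQ S Sp R b q) w2 p2)
            \<and> (\<forall>p1 p2. reaches (hyp MQ S Sp R b q) w1 p1 \<and> reaches (hyp MQ S Sp R b q) w2 p2
                 \<longrightarrow> p1 \<noteq> p2))"
proof -
  interpret hctx Alph MQ S Sp R E N \<kappa> b q
    by (rule hctx.intro) (rule assms)+
  have acc: "accepts (hyp MQ S Sp R b q) w \<longleftrightarrow> MQ w" if w: "w \<in> S \<union> Sp \<union> R" for w
  proof -
    have "accepts (hyp MQ S Sp R b q) w \<longleftrightarrow> q w \<in> q ` {w \<in> S \<union> Sp. MQ w}"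
      unfolding accepts_def using reaches_iff[OF w] by (simp add: hyp_def)
    also have "\<dots> \<longleftrightarrow> MQ w"
    proof
      assume "q w \<in> q ` {w \<in> S \<union> Sp. MQ w}"
      then obtain w' where "w' \<in> S \<union> Sp" "MQ w'" "q w = q w'" by blast
      then show "MQ w" using same_MQ[OF w, of w'] by simp
    next
      assume "MQ w"
      obtain w' where "w' \<in> S \<union> Sp" "q w = q w'" using inlocs[OF w] by blast
      then show "q w \<in> q ` {w \<in> S \<union> Sp. MQ w}" using same_MQ[OF w, of w'] \<open>MQ w\<close> by auto
    qed
    finally show ?thesis .
  qed
  have sep3: "q w1 \<noteq> q w2
            \<and> (\<exists>p1. reaches (hyp MQ S Sp R b q) w1 p1)
            \<and> (\<exists>p2. reaches (hyp MQ S Sp R b q) w2 p2)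
            \<and> (\<forall>p1 p2. reaches (hyp MQ S Sp R b q) w1 p1 \<and> reaches (hyp MQ S Sp R b q) w2 p2
                 \<longrightarrow> p1 \<noteq> p2)"
    if w: "w1 \<in> S \<union> Sp \<union> R" "w2 \<in> S \<union> Sp \<union> R" and l: "lr b w1 i1" "lr b w2 i2"
      and nf: "\<not> ftab MQ E w1 w2 i1 i2" for w1 w2 i1 i2
  proof -
    have "\<not> ftab MQ E w1 w2 (lst b w1) (lst b w2)"
      using nf ftab_cong[OF lr_nu[of b, OF b0 l(1)] lr_nu[of b, OF b0 l(2)]] by simp
    then have ne: "q w1 \<noteq> q w2" using same_ftab[OF w] by blast
    then show ?thesis using reaches_iff[OF w(1)] reaches_iff[OF w(2)] by simp
  qed
  show ?thesis
  proof (intro conjI is_ota det)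
    show "\<forall>w \<in> S \<union> Sp \<union> R. accepts (hyp MQ S Sp R b q) w \<longleftrightarrow> MQ w"
      using acc by blast
    show "\<forall>w1 \<in> S \<union> Sp \<union> R. \<forall>w2 \<in> S \<union> Sp \<union> R. \<forall>i1 i2.
          lr b w1 i1 \<and> lr b w2 i2 \<and> \<not> ftab MQ E w1 w2 i1 i2 \<longrightarrow>
            q w1 \<noteq> q w2
            \<and> (\<exists>p1. reaches (hyp MQ S Sp R b q) w1 p1)
            \<and> (\<exists>p2. reaches (hyp MQ S Sp R b q) w2 p2)
            \<and> (\<forall>p1 p2. reaches (hyp MQ S Sp R b q) w1 p1 \<and> reaches (hyp MQ S Sp R b q) w2 p2
                 \<longrightarrow> p1 \<noteq> p2)"
    proof (intro ballI allI impI)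
      fix w1 w2 i1 i2
      assume w: "w1 \<in> S \<union> Sp \<union> R" "w2 \<in> S \<union> Sp \<union> R"
        and h: "lr b w1 i1 \<and> lr b w2 i2 \<and> \<not> ftab MQ E w1 w2 i1 i2"
      show "q w1 \<noteq> q w2
            \<and> (\<exists>p1. reaches (hyp MQ S Sp R b q) w1 p1)
            \<and> (\<exists>p2. reaches (hyp MQ S Sp R b q) w2 p2)
            \<and> (\<forall>p1 p2. reaches (hyp MQ S Sp R b q) w1 p1 \<and> reaches (hyp MQ S Sp R b q) w2 p2
                 \<longrightarrow> p1 \<noteq> p2)"
        using sep3[OF w h[THEN conjunct1] h[THEN conjunct2, THEN conjunct1] h[THEN conjunct2, THEN conjunct2]] .
    qed
  qed
qed

end
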